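(* Let $X$ be a well-filtered coherent space. If $X\times X$ is a Fréchet space, then $X$ is sober.
   Context: Spaces are $T_0$; the specialization order is $x\le y$ iff $x\in\overline{\{y\}}$, and a subset is saturated if it is an upper set in this order. $X$ is well-filtered if for every filtered family $\mathcal F$ of compact saturated subsets and every open $U$, $\bigcap\mathcal F\subseteq U$ implies $F\subseteq U$ for some $F\in\mathcal F$. $X$ is coherent if the intersection of any two compact saturated subsets is compact. A space is Fréchet if whenever $x$ lies in the closure of a set $A$, some sequence in $A$ converges to $x$. A $T_0$ space is sober if every irreducible closed set equals $\overline{\{x\}}$ for some point $x$. *)

theory Defs
  imports "HOL-Analysis.Analysis"
begin

definition spec_le :: "'a topology \<Rightarrow> 'a \<Rightarrow> 'a \<Rightarrow> bool" where
  "spec_le X x y \<longleftrightarrow> x \<in> topspace X \<and> y \<in> topspace X \<and> x \<in> X closure_of {y}"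

definition saturated_in :: "'a topology \<Rightarrow> 'a set \<Rightarrow> bool" where
  "saturated_in X A \<longleftrightarrow> A \<subseteq> topspace X \<and> (\<forall>x\<in>A. \<forall>y. spec_le X x y \<longrightarrow> y \<in> A)"

definition compact_saturated :: "'a topology \<Rightarrow> 'a set \<Rightarrow> bool" where
  "compact_saturated X K \<longleftrightarrow> compactin X K \<and> saturated_in X K"

definition filtered_family :: "'a set set \<Rightarrow> bool" where
  "filtered_family \<F> \<longleftrightarrow> \<F> \<noteq> {} \<and> (\<forall>F1\<in>\<F>. \<forall>F2\<in>\<F>. \<exists>F3\<in>\<F>. F3 \<subseteq> F1 \<inter> F2)"

definition well_filtered :: "'a topology \<Rightarrow> bool" where
  "well_filtered X \<longleftrightarrow>
     (\<forall>\<F> U. filtered_family \<F> \<and> (\<forall>K\<in>\<F>. compact_saturated X K) \<and> openin X U \<and> \<Inter>\<F> \<subseteq> U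
        \<longrightarrow> (\<exists>F\<in>\<F>. F \<subseteq> U))"

definition coherent_space :: "'a topology \<Rightarrow> bool" where
  "coherent_space X \<longleftrightarrow>
     (\<forall>K1 K2. compact_saturated X K1 \<and> compact_saturated X K2 \<longrightarrow> compactin X (K1 \<inter> K2))"

definition frechet_space :: "'a topology \<Rightarrow> bool" where
  "frechet_space X \<longleftrightarrow>
     (\<forall>A x. A \<subseteq> topspace X \<and> x \<in> X closure_of A \<longrightarrow>
        (\<exists>s. (\<forall>n. s n \<in> A) \<and> limitin X s x sequentially))"

definition irreducible_closed :: "'a topology \<Rightarrow> 'a set \<Rightarrow> bool" where
  "irreducible_closed X A \<longleftrightarrow> closedin X A \<and> A \<noteq> {} \<and>
     (\<forall>B C. closedin X B \<and> closedin X C \<and> A \<subseteq> B \<union> C \<longrightarrow> A \<subseteq> B \<or> A \<subseteq> C)"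

definition sober_space :: "'a topology \<Rightarrow> bool" where
  "sober_space X \<longleftrightarrow> t0_space X \<and>
     (\<forall>A. irreducible_closed X A \<longrightarrow> (\<exists>x\<in>topspace X. A = X closure_of {x}))"

end

theory Submission
  imports Defs
begin

definition upset :: "'a topology \<Rightarrow> 'a set \<Rightarrow> 'a set" where
  "upset X K = {y \<in> topspace X. \<exists>x\<in>K. spec_le X x y}"

lemma open_upper: "openin X U \<Longrightarrow> x \<in> U \<Longrightarrow> spec_le X x y \<Longrightarrow> y \<in> U"
  unfolding spec_le_def by (auto simp: in_closure_of)

lemma spec_trans: assumes "spec_le X x y" "spec_le X y z" shows "spec_le X x z"
proof -
  have "x \<in> X closure_of {z}"
    unfolding in_closure_of
  proof (intro conjI allI impI)
    show "x \<in> topspace X" using assms(1) unfolding spec_le_def by blast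
  next
    fix T assume "x \<in> T \<and> openin X T"
    then have "y \<in> T" using assms(1) open_upper by metis
    then have "z \<in> T" using assms(2) open_upper \<open>x \<in> T \<and> openin X T\<close> by metis
    then show "\<exists>w. w \<in> {z} \<and> w \<in> T" by blast
  qed
  then show ?thesis using assms unfolding spec_le_def by blast
qed

lemma spec_refl: "x \<in> topspace X \<Longrightarrow> spec_le X x x"
  unfolding spec_le_def using closure_of_subset[of "{x}" X] by auto

lemma upset_saturated: "saturated_in X (upset X K)"
  unfolding saturated_in_def
proof (intro conjI ballI allI impI)
  show "upset X K \<subseteq> topspace X" unfolding upset_def by blast
next
  fix x y assume x: "x \<in> upset X K" and xy: "spec_le X x y"
  then obtain k where k: "k \<in> K" "spec_le X k x" unfolding upset_def by blast
  have "spec_le X k y" using spec_trans[OF k(2) xy] .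
  moreover have "y \<in> topspace X" using xy unfolding spec_le_def by blast
  ultimately show "y \<in> upset X K" using k unfolding upset_def by blast
qed

lemma upset_compact: assumes "compactin X K" shows "compactin X (upset X K)"
  unfolding compactin_def
proof (intro conjI allI impI)
  show "upset X K \<subseteq> topspace X" unfolding upset_def by blast
next
  fix \<U> assume H: "(\<forall>U\<in>\<U>. openin X U) \<and> upset X K \<subseteq> \<Union>\<U>"
  have Kt: "K \<subseteq> topspace X" using assms compactin_subset_topspace by blast
  have "K \<subseteq> upset X K" using Kt spec_refl unfolding upset_def by fastforce
  then have "K \<subseteq> \<Union>\<U>" using H by blast
  moreover have "\<forall>U\<in>\<U>. openin X U" using H by blast
  ultimately obtain F where F: "finite F" "F \<subseteq> \<U>" "K \<subseteq> \<Union>F"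
    using assms unfolding compactin_def by blast
  have "upset X K \<subseteq> \<Union>F"
  proof
    fix y assume "y \<in> upset X K"
    then obtain x where x: "x \<in> K" "spec_le X x y" unfolding upset_def by blast
    then obtain B where "B \<in> F" "x \<in> B" using F by blast
    moreover have "openin X B" using H F(2) \<open>B \<in> F\<close> by blast
    ultimately have "y \<in> B" using open_upper[of X B x y] x(2) by blast
    then show "y \<in> \<Union>F" using \<open>B \<in> F\<close> by blast
  qed
  then show "\<exists>F. finite F \<and> F \<subseteq> \<U> \<and> upset X K \<subseteq> \<Union>F" using F by blast
qed

lemma saturated_Int: "saturated_in X A \<Longrightarrow> saturated_in X B \<Longrightarrow> saturated_in X (A \<inter> B)"
  unfolding saturated_in_def by blast

lemma upset_mono: "K \<subseteq> L \<Longrightarrow> upset X K \<subseteq> upset X L"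
  unfolding upset_def by blast

lemma seq_compact:
  assumes lim: "limitin X t a sequentially" and tt: "\<forall>n. t n \<in> topspace X"
  shows "compactin X (insert a (t ` {N..}))"
  unfolding compactin_def
proof (intro conjI allI impI)
  have "a \<in> topspace X" using lim unfolding limitin_def by blast
  then show "insert a (t ` {N..}) \<subseteq> topspace X" using tt by blast
next
  fix \<U> assume H: "(\<forall>U\<in>\<U>. openin X U) \<and> insert a (t ` {N..}) \<subseteq> \<Union>\<U>"
  then obtain B0 where B0: "B0 \<in> \<U>" "a \<in> B0" by blast
  then obtain M where M: "\<forall>n. M \<le> n \<longrightarrow> t n \<in> B0"
    using lim H unfolding limitin_sequentially by meson
  define B where "B n = (SOME B. B \<in> \<U> \<and> t n \<in> B)" for n
  have Bn: "B n \<in> \<U> \<and> t n \<in> B n" if "N \<le> n" for n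
  proof -
    have "\<exists>B. B \<in> \<U> \<and> t n \<in> B" using H that by blast
    then show ?thesis unfolding B_def by (rule someI_ex)
  qed
  define F where "F = insert B0 (B ` {N..<M})"
  have "finite F" "F \<subseteq> \<U>" using B0 Bn unfolding F_def by auto
  moreover have "insert a (t ` {N..}) \<subseteq> \<Union>F"
  proof
    fix z assume "z \<in> insert a (t ` {N..})"
    then consider "z = a" | n where "N \<le> n" "z = t n" by auto
    then show "z \<in> \<Union>F"
    proof cases
      case 1 then show ?thesis using B0 F_def by blast
    next
      case (2 n)
      show ?thesis
      proof (cases "M \<le> n")
        case True then show ?thesis using M 2 F_def by blast
      next
        case False
        then have "n \<in> {N..<M}" using 2 by auto
        then show ?thesis using Bn[of n] 2 F_def by blast
      qed
    qed
  qed
  ultimately show "\<exists>F. finite F \<and> F \<subseteq> \<U> \<and> insert a (t ` {N..}) \<subseteq> \<Union>F" by blast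
qed

lemma limit_below:
  assumes lim: "limitin X t a sequentially" and H: "\<forall>N. y \<in> upset X (insert a (t ` {N..}))"
  shows "spec_le X a y"
proof (cases "spec_le X a y")
  case True then show ?thesis .
next
  case False
  have fr: "\<exists>n\<ge>N. spec_le X (t n) y" for N
  proof -
    have "y \<in> upset X (insert a (t ` {N..}))" using H by blast
    then obtain x where "x \<in> insert a (t ` {N..})" "spec_le X x y" unfolding upset_def by blast
    then show ?thesis using False by auto
  qed
  have yt: "y \<in> topspace X" using H unfolding upset_def by blast
  have at: "a \<in> topspace X" using lim unfolding limitin_def by blast
  have "a \<in> X closure_of {y}"
    unfolding in_closure_of
  proof (intro conjI allI impI)
    show "a \<in> topspace X" by (rule at)
  next
    fix T assume T: "a \<in> T \<and> openin X T"
    then obtain M where M: "\<forall>n. M \<le> n \<longrightarrow> t n \<in> T"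
      using lim unfolding limitin_sequentially by meson
    obtain n where "n \<ge> M" "spec_le X (t n) y" using fr by blast
    then have "t n \<in> T" using M by blast
    then have "y \<in> T" using open_upper[of X T "t n" y] T \<open>spec_le X (t n) y\<close> by blast
    then show "\<exists>w. w \<in> {y} \<and> w \<in> T" by blast
  qed
  then show ?thesis using at yt unfolding spec_le_def by blast
qed

lemma directed_irr:
  assumes wf: "well_filtered X" and coh: "coherent_space X"
    and fr: "frechet_space (prod_topology X X)"
    and irr: "irreducible_closed X A" and aA: "a \<in> A" and bA: "b \<in> A"
  shows "\<exists>y\<in>A. spec_le X a y \<and> spec_le X b y"
proof -
  have clA: "closedin X A" using irr irreducible_closed_def by blast
  have At: "A \<subseteq> topspace X" using clA closedin_subset by blast
  define D where "D = (\<lambda>x. (x,x)) ` A"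
  have Dt: "D \<subseteq> topspace (prod_topology X X)" using At D_def by auto
  have "(a,b) \<in> prod_topology X X closure_of D"
    unfolding in_closure_of
  proof (intro conjI allI impI)
    show "(a,b) \<in> topspace (prod_topology X X)" using aA bA At by auto
  next
    fix T assume T: "(a,b) \<in> T \<and> openin (prod_topology X X) T"
    then obtain U V where UV: "openin X U" "openin X V" "a \<in> U" "b \<in> V" "U \<times> V \<subseteq> T"
      unfolding openin_prod_topology_alt by blast
    have "\<exists>x\<in>A. x \<in> U \<and> x \<in> V"
    proof (rule ccontr)
      assume "\<not> ?thesis"
      then have "A \<subseteq> (topspace X - U) \<union> (topspace X - V)" using At by blast
      moreover have "closedin X (topspace X - U)" "closedin X (topspace X - V)" using UV by auto
      ultimately have "A \<subseteq> topspace X - U \<or> A \<subseteq> topspace X - V"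
        using irr unfolding irreducible_closed_def by blast
      then show False using UV aA bA by blast
    qed
    then obtain x where "x \<in> A" "x \<in> U" "x \<in> V" by blast
    then show "\<exists>w. w \<in> D \<and> w \<in> T" using UV D_def by blast
  qed
  then obtain s where s: "\<forall>n. s n \<in> D" "limitin (prod_topology X X) s (a,b) sequentially"
    using fr Dt unfolding frechet_space_def by blast
  define t where "t n = fst (s n)" for n
  have tA: "t n \<in> A \<and> s n = (t n, t n)" for n
  proof -
    have "s n \<in> D" using s(1) by blast
    then obtain x where "x \<in> A" "s n = (x,x)" unfolding D_def by blast
    then show ?thesis unfolding t_def by simp
  qed
  have st: "s n = (t n, t n)" for n using tA by blast
  have "fst \<circ> s = t" "snd \<circ> s = t" using st by (auto simp: fun_eq_iff)
  then have la: "limitin X t a sequentially" and lb: "limitin X t b sequentially"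
    using s(2) limitin_pairwise[of X X s "(a,b)" sequentially] by auto
  have tt: "\<forall>n. t n \<in> topspace X" using tA At by blast
  have tA: "t n \<in> A" for n using tA by blast
  define M where "M N = upset X (insert a (t ` {N..})) \<inter> upset X (insert b (t ` {N..}))" for N
  have cs: "compact_saturated X (M N)" for N
  proof -
    have c1: "compact_saturated X (upset X (insert a (t ` {N..})))"
      unfolding compact_saturated_def
      using upset_compact[OF seq_compact[OF la tt]] upset_saturated by (intro conjI)
    have c2: "compact_saturated X (upset X (insert b (t ` {N..})))"
      unfolding compact_saturated_def
      using upset_compact[OF seq_compact[OF lb tt]] upset_saturated by (intro conjI)
    have "compactin X (M N)" unfolding M_def
      using coh[unfolded coherent_space_def, rule_format, OF conjI[OF c1 c2]] .
    moreover have "saturated_in X (M N)" unfolding M_def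
      by (rule saturated_Int[OF upset_saturated upset_saturated])
    ultimately show ?thesis unfolding compact_saturated_def by (intro conjI)
  qed
  have mono: "M N2 \<subseteq> M N1" if "N1 \<le> N2" for N1 N2
  proof -
    have "insert a (t ` {N2..}) \<subseteq> insert a (t ` {N1..})" "insert b (t ` {N2..}) \<subseteq> insert b (t ` {N1..})"
      using that by auto
    then show ?thesis unfolding M_def using upset_mono by (metis Int_mono)
  qed
  have ff: "filtered_family (range M)"
    unfolding filtered_family_def
  proof (intro conjI ballI)
    show "range M \<noteq> {}" by blast
  next
    fix F1 F2 assume "F1 \<in> range M" "F2 \<in> range M"
    then obtain N1 N2 where "F1 = M N1" "F2 = M N2" by blast
    then show "\<exists>F3\<in>range M. F3 \<subseteq> F1 \<inter> F2" using mono[of N1 "max N1 N2"] mono[of N2 "max N1 N2"]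
      by auto
  qed
  have op: "openin X (topspace X - A)" using clA by auto
  have tM: "t N \<in> M N" for N using tt spec_refl unfolding M_def upset_def by fastforce
  have "\<not> (\<exists>F\<in>range M. F \<subseteq> topspace X - A)" using tM tA by blast
  then have "\<not> \<Inter>(range M) \<subseteq> topspace X - A"
    using wf ff cs op unfolding well_filtered_def by blast
  then obtain y where y: "y \<in> \<Inter>(range M)" "y \<notin> topspace X - A" by blast
  have "y \<in> topspace X" using y(1) unfolding M_def upset_def by blast
  then have yA: "y \<in> A" using y(2) by blast
  have "spec_le X a y" using limit_below[OF la] y(1) unfolding M_def by blast
  moreover have "spec_le X b y" using limit_below[OF lb] y(1) unfolding M_def by blast
  ultimately show ?thesis using yA by blast
qed

theorem corollary3p11:
  fixes X :: "'a topology"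
  assumes "t0_space X"
    and "well_filtered X"
    and "coherent_space X"
    and "frechet_space (prod_topology X X)"
  shows "sober_space X"
  unfolding sober_space_def
proof (intro conjI allI impI)
  show "t0_space X" by fact
next
  fix A assume irr: "irreducible_closed X A"
  have clA: "closedin X A" and ne: "A \<noteq> {}" using irr irreducible_closed_def by blast+
  have At: "A \<subseteq> topspace X" using clA closedin_subset by blast
  define \<F> where "\<F> = (\<lambda>a. upset X {a}) ` A"
  have cs: "\<forall>K\<in>\<F>. compact_saturated X K"
    unfolding \<F>_def compact_saturated_def using upset_compact upset_saturated At compactin_sing
    by (metis (no_types, lifting) imageE subsetD)
  have ff: "filtered_family \<F>"
    unfolding filtered_family_def
  proof (intro conjI ballI)
    show "\<F> \<noteq> {}" using ne \<F>_def by blast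
  next
    fix F1 F2 assume "F1 \<in> \<F>" "F2 \<in> \<F>"
    then obtain a b where ab: "a \<in> A" "b \<in> A" "F1 = upset X {a}" "F2 = upset X {b}"
      unfolding \<F>_def by blast
    then obtain c where c: "c \<in> A" "spec_le X a c" "spec_le X b c"
      using directed_irr[OF assms(2,3,4) irr] by blast
    have "upset X {c} \<subseteq> F1 \<inter> F2"
    proof
      fix z assume "z \<in> upset X {c}"
      then have z: "z \<in> topspace X" "spec_le X c z" unfolding upset_def by auto
      have "spec_le X a z" using spec_trans[OF c(2) z(2)] .
      moreover have "spec_le X b z" using spec_trans[OF c(3) z(2)] .
      ultimately show "z \<in> F1 \<inter> F2" using ab(3,4) z(1) unfolding upset_def by blast
    qed
    then show "\<exists>F3\<in>\<F>. F3 \<subseteq> F1 \<inter> F2" using c \<F>_def by blast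
  qed
  have op: "openin X (topspace X - A)" using clA by auto
  have "\<not> (\<exists>F\<in>\<F>. F \<subseteq> topspace X - A)"
  proof
    assume "\<exists>F\<in>\<F>. F \<subseteq> topspace X - A"
    then obtain a where "a \<in> A" "upset X {a} \<subseteq> topspace X - A" unfolding \<F>_def by blast
    moreover have "a \<in> upset X {a}"
      using spec_refl[of a X] \<open>a \<in> A\<close> At unfolding upset_def by blast
    ultimately show False by blast
  qed
  then have "\<not> \<Inter>\<F> \<subseteq> topspace X - A"
    using assms(2) ff cs op unfolding well_filtered_def by blast
  then obtain x where x: "x \<in> \<Inter>\<F>" "x \<notin> topspace X - A" by blast
  obtain a0 where "a0 \<in> A" using ne by blast
  then have "x \<in> topspace X" using x(1) unfolding \<F>_def upset_def by blast
  then have xA: "x \<in> A" using x(2) by blast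
  have "A \<subseteq> X closure_of {x}"
  proof
    fix a assume "a \<in> A"
    then have "x \<in> upset X {a}" using x(1) \<F>_def by blast
    then show "a \<in> X closure_of {x}" unfolding upset_def spec_le_def by blast
  qed
  moreover have "X closure_of {x} \<subseteq> A" using closure_of_minimal[of "{x}" A X] xA clA by blast
  ultimately show "\<exists>x\<in>topspace X. A = X closure_of {x}" using xA At by blast
qed

end
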